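(* Let $\mathcal H$ be a connected $As^c$-$Mag$-bialgebra and define $e:\bar{\mathcal H}\to\bar{\mathcal H}$ by $e=\mathrm{id}+\sum_{n\ge1}(-1)^n\omega^{n+1}\circ\delta^n$. Then: (i) $e(\omega_r^n(x_1,\dots,x_n))=0$ for all $n\ge2$ and all $x_1,\dots,x_n\in\mathrm{Prim}\,\mathcal H$; (ii) $\delta\circ e=0$; (iii) the restriction of $e$ to $\mathrm{Prim}\,\mathcal H$ is the identity.
   Context: An $As^c$-$Mag$-bialgebra is a vector space $\mathcal H$ over a field with a bilinear product $\cdot$ (not assumed associative) with two-sided unit $1$ and a coassociative counital coproduct $\Delta$ with $\Delta(1)=1\otimes1$ and $\Delta(x\cdot y)=\Delta(x)\cdot(1\otimes y)+(x\otimes1)\cdot\Delta(y)-x\otimes y$, the product on $\mathcal H\otimes\mathcal H$ being componentwise. $\bar{\mathcal H}$ = kernel of the counit; reduced coproduct $\delta(x)=\Delta(x)-x\otimes1-1\otimes x$ on $\bar{\mathcal H}$; $\delta^1=\delta$, $\delta^n=(\delta\otimes\mathrm{id}^{\otimes(n-1)})\circ\delta^{n-1}:\bar{\mathcal H}\to\bar{\mathcal H}^{\otimes(n+1)}$; $\mathrm{Prim}\,\mathcal H=\ker\delta$. Connected means: for each $x\in\bar{\mathcal H}$, $\delta^n(x)=0$ for $n$ large, so the sum defining $e$ is finite. $\omega^{m}$ is the left comb $\omega^1(x)=x$, $\omega^m(x_1,\dots,x_m)=\omega^{m-1}(x_1,\dots,x_{m-1})\cdot x_m$, applied to the tensor factors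 ($\omega^{n+1}\circ\delta^n$ means applying $\omega^{n+1}$ to $\delta^n(x)\in\bar{\mathcal H}^{\otimes(n+1)}$). $\omega_r^m$ is the right comb $\omega_r^1(x)=x$, $\omega_r^m(x_1,\dots,x_m)=x_1\cdot\omega_r^{m-1}(x_2,\dots,x_m)$. *)

theory Defs
  imports "HOL-Library.Poly_Mapping"
begin

(* Model: a vector space over the field 'k is represented (via a basis 'b) as
  the free vector space 'b \<Rightarrow>\<^sub>0 'k.  The tensor powers H^{\<otimes>n} are represented
  as the subspaces of 'b list \<Rightarrow>\<^sub>0 'k supported on words of length n
  (basis of H^{\<otimes>n} = e_{b1} \<otimes> ... \<otimes> e_{bn} \<leftrightarrow> [b1,...,bn]). *)

definition smul :: "'k::field \<Rightarrow> ('a \<Rightarrow>\<^sub>0 'k) \<Rightarrow> ('a \<Rightarrow>\<^sub>0 'k)" where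
  "smul c x = Poly_Mapping.map (\<lambda>a. c * a) x"

definition bvec :: "'a \<Rightarrow> ('a \<Rightarrow>\<^sub>0 'k::field)" where
  "bvec b = Poly_Mapping.single b 1"

definition lin_ext :: "('a \<Rightarrow> ('c \<Rightarrow>\<^sub>0 'k::field)) \<Rightarrow> ('a \<Rightarrow>\<^sub>0 'k) \<Rightarrow> ('c \<Rightarrow>\<^sub>0 'k)" where
  "lin_ext g t = (\<Sum>w\<in>Poly_Mapping.keys t. smul (Poly_Mapping.lookup t w) (g w))"

definition cat :: "('b list \<Rightarrow>\<^sub>0 'k::field) \<Rightarrow> ('b list \<Rightarrow>\<^sub>0 'k) \<Rightarrow> ('b list \<Rightarrow>\<^sub>0 'k)" where
  "cat s t = (\<Sum>v\<in>Poly_Mapping.keys s. \<Sum>w\<in>Poly_Mapping.keys t.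
                 Poly_Mapping.single (v @ w) (Poly_Mapping.lookup s v * Poly_Mapping.lookup t w))"

definition emb1 :: "('b \<Rightarrow>\<^sub>0 'k::field) \<Rightarrow> ('b list \<Rightarrow>\<^sub>0 'k)" where
  "emb1 x = lin_ext (\<lambda>b. Poly_Mapping.single [b] 1) x"

fun tens :: "('b \<Rightarrow>\<^sub>0 'k::field) list \<Rightarrow> ('b list \<Rightarrow>\<^sub>0 'k)" where
  "tens [] = Poly_Mapping.single [] 1"
| "tens (x # xs) = cat (emb1 x) (tens xs)"

(* id^{\<otimes>i} \<otimes> F \<otimes> id^{\<otimes>...}: apply the linear map F : H \<rightarrow> T to tensor factor number i (0-based) *)
definition app_at :: "nat \<Rightarrow> (('b \<Rightarrow>\<^sub>0 'k::field) \<Rightarrow> ('b list \<Rightarrow>\<^sub>0 'k)) \<Rightarrow> ('b list \<Rightarrow>\<^sub>0 'k) \<Rightarrow> ('b list \<Rightarrow>\<^sub>0 'k)" where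
  "app_at i F t = lin_ext (\<lambda>w. cat (cat (Poly_Mapping.single (take i w) 1) (F (bvec (w ! i))))
                                   (Poly_Mapping.single (drop (Suc i) w) 1)) t"

(* (\<epsilon> \<otimes> id) and (id \<otimes> \<epsilon>) on H \<otimes> H, with k \<otimes> H = H \<otimes> k = H *)
definition eps_left :: "(('b \<Rightarrow>\<^sub>0 'k::field) \<Rightarrow> 'k) \<Rightarrow> ('b list \<Rightarrow>\<^sub>0 'k) \<Rightarrow> ('b \<Rightarrow>\<^sub>0 'k)" where
  "eps_left eps t = lin_ext (\<lambda>w. smul (eps (bvec (w ! 0))) (bvec (w ! 1))) t"

definition eps_right :: "(('b \<Rightarrow>\<^sub>0 'k::field) \<Rightarrow> 'k) \<Rightarrow> ('b list \<Rightarrow>\<^sub>0 'k) \<Rightarrow> ('b \<Rightarrow>\<^sub>0 'k)" where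
  "eps_right eps t = lin_ext (\<lambda>w. smul (eps (bvec (w ! 1))) (bvec (w ! 0))) t"

definition mult2 :: "(('b \<Rightarrow>\<^sub>0 'k::field) \<Rightarrow> ('b \<Rightarrow>\<^sub>0 'k) \<Rightarrow> ('b \<Rightarrow>\<^sub>0 'k))
    \<Rightarrow> ('b list \<Rightarrow>\<^sub>0 'k) \<Rightarrow> ('b list \<Rightarrow>\<^sub>0 'k) \<Rightarrow> ('b list \<Rightarrow>\<^sub>0 'k)" where
  "mult2 m s t = lin_ext (\<lambda>v. lin_ext (\<lambda>w.
       tens [m (bvec (v ! 0)) (bvec (w ! 0)), m (bvec (v ! 1)) (bvec (w ! 1))]) t) s"

(* left comb \<omega>^m and right comb \<omega>_r^m (m \<ge> 1) *)
fun lcomb :: "('h \<Rightarrow> 'h \<Rightarrow> 'h) \<Rightarrow> 'h list \<Rightarrow> 'h" where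
  "lcomb m [] = undefined"
| "lcomb m (x # xs) = foldl m x xs"

fun rcomb :: "('h \<Rightarrow> 'h \<Rightarrow> 'h) \<Rightarrow> 'h list \<Rightarrow> 'h" where
  "rcomb m [] = undefined"
| "rcomb m [x] = x"
| "rcomb m (x # y # ys) = m x (rcomb m (y # ys))"

(* \<omega> applied to a tensor: \<omega>^{n} on the degree-n component *)
definition omega :: "(('b \<Rightarrow>\<^sub>0 'k::field) \<Rightarrow> ('b \<Rightarrow>\<^sub>0 'k) \<Rightarrow> ('b \<Rightarrow>\<^sub>0 'k))
    \<Rightarrow> ('b list \<Rightarrow>\<^sub>0 'k) \<Rightarrow> ('b \<Rightarrow>\<^sub>0 'k)" where
  "omega m t = lin_ext (\<lambda>w. lcomb m (map bvec w)) t"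

definition AsC_Mag_bialgebra ::
  "(('b \<Rightarrow>\<^sub>0 'k::field) \<Rightarrow> ('b \<Rightarrow>\<^sub>0 'k) \<Rightarrow> ('b \<Rightarrow>\<^sub>0 'k)) \<Rightarrow> ('b \<Rightarrow>\<^sub>0 'k)
   \<Rightarrow> (('b \<Rightarrow>\<^sub>0 'k) \<Rightarrow> ('b list \<Rightarrow>\<^sub>0 'k)) \<Rightarrow> (('b \<Rightarrow>\<^sub>0 'k) \<Rightarrow> 'k) \<Rightarrow> bool" where
  "AsC_Mag_bialgebra m u Delta eps \<longleftrightarrow>
     \<comment> \<open>bilinear product\<close>
     (\<forall>x y z. m (x + y) z = m x z + m y z \<and> m x (y + z) = m x y + m x z) \<and>
     (\<forall>c x y. m (smul c x) y = smul c (m x y) \<and> m x (smul c y) = smul c (m x y)) \<and>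
     \<comment> \<open>two-sided unit\<close>
     (\<forall>x. m u x = x \<and> m x u = x) \<and>
     \<comment> \<open>linear coproduct with values in H \<otimes> H\<close>
     (\<forall>x y. Delta (x + y) = Delta x + Delta y) \<and>
     (\<forall>c x. Delta (smul c x) = smul c (Delta x)) \<and>
     (\<forall>x. Poly_Mapping.keys (Delta x) \<subseteq> {w. length w = 2}) \<and>
     \<comment> \<open>coassociativity\<close>
     (\<forall>x. app_at 0 Delta (Delta x) = app_at 1 Delta (Delta x)) \<and>
     \<comment> \<open>linear counit\<close>
     (\<forall>x y. eps (x + y) = eps x + eps y) \<and>
     (\<forall>c x. eps (smul c x) = c * eps x) \<and>
     (\<forall>x. eps_left eps (Delta x) = x \<and> eps_right eps (Delta x) = x) \<and>
     \<comment> \<open>\<Delta>(1) = 1 \<otimes> 1\<close>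
     Delta u = tens [u, u] \<and>
     \<comment> \<open>compatibility\<close>
     (\<forall>x y. Delta (m x y) = mult2 m (Delta x) (tens [u, y]) + mult2 m (tens [x, u]) (Delta y)
                            - tens [x, y])"

definition Hbar :: "(('b \<Rightarrow>\<^sub>0 'k::field) \<Rightarrow> 'k) \<Rightarrow> ('b \<Rightarrow>\<^sub>0 'k) set" where
  "Hbar eps = {x. eps x = 0}"

definition red_delta :: "('b \<Rightarrow>\<^sub>0 'k::field) \<Rightarrow> (('b \<Rightarrow>\<^sub>0 'k) \<Rightarrow> ('b list \<Rightarrow>\<^sub>0 'k))
    \<Rightarrow> ('b \<Rightarrow>\<^sub>0 'k) \<Rightarrow> ('b list \<Rightarrow>\<^sub>0 'k)" where
  "red_delta u Delta x = Delta x - tens [x, u] - tens [u, x]"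

(* \<delta>^n, n \<ge> 1 (the value at 0 is irrelevant) *)
fun delta_pow :: "('b \<Rightarrow>\<^sub>0 'k::field) \<Rightarrow> (('b \<Rightarrow>\<^sub>0 'k) \<Rightarrow> ('b list \<Rightarrow>\<^sub>0 'k))
    \<Rightarrow> nat \<Rightarrow> ('b \<Rightarrow>\<^sub>0 'k) \<Rightarrow> ('b list \<Rightarrow>\<^sub>0 'k)" where
  "delta_pow u Delta 0 x = emb1 x"
| "delta_pow u Delta (Suc 0) x = red_delta u Delta x"
| "delta_pow u Delta (Suc (Suc n)) x = app_at 0 (red_delta u Delta) (delta_pow u Delta (Suc n) x)"

definition Prim :: "('b \<Rightarrow>\<^sub>0 'k::field) \<Rightarrow> (('b \<Rightarrow>\<^sub>0 'k) \<Rightarrow> ('b list \<Rightarrow>\<^sub>0 'k))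
    \<Rightarrow> (('b \<Rightarrow>\<^sub>0 'k) \<Rightarrow> 'k) \<Rightarrow> ('b \<Rightarrow>\<^sub>0 'k) set" where
  "Prim u Delta eps = {x \<in> Hbar eps. red_delta u Delta x = 0}"

definition connected :: "('b \<Rightarrow>\<^sub>0 'k::field) \<Rightarrow> (('b \<Rightarrow>\<^sub>0 'k) \<Rightarrow> ('b list \<Rightarrow>\<^sub>0 'k))
    \<Rightarrow> (('b \<Rightarrow>\<^sub>0 'k) \<Rightarrow> 'k) \<Rightarrow> bool" where
  "connected u Delta eps \<longleftrightarrow> (\<forall>x\<in>Hbar eps. \<exists>N. \<forall>n\<ge>N. delta_pow u Delta n x = 0)"

(* e = id + \<Sum>_{n\<ge>1} (-1)^n \<omega>^{n+1} \<circ> \<delta>^n  (finite sum: only nonzero terms) *)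
definition e_map :: "(('b \<Rightarrow>\<^sub>0 'k::field) \<Rightarrow> ('b \<Rightarrow>\<^sub>0 'k) \<Rightarrow> ('b \<Rightarrow>\<^sub>0 'k)) \<Rightarrow> ('b \<Rightarrow>\<^sub>0 'k)
    \<Rightarrow> (('b \<Rightarrow>\<^sub>0 'k) \<Rightarrow> ('b list \<Rightarrow>\<^sub>0 'k)) \<Rightarrow> ('b \<Rightarrow>\<^sub>0 'k) \<Rightarrow> ('b \<Rightarrow>\<^sub>0 'k)" where
  "e_map m u Delta x = x + (\<Sum>n | 1 \<le> n \<and> delta_pow u Delta n x \<noteq> 0.
                              smul ((-1) ^ n) (omega m (delta_pow u Delta n x)))"

end

theory Submission
  imports Defs
begin

lemma lookup_smul [simp]: "Poly_Mapping.lookup (smul c x) k = c * Poly_Mapping.lookup x k"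
  by (simp add: smul_def map.rep_eq when_def)

lemma smul_add: "smul c (x + y) = smul c x + smul c y"
  by (rule poly_mapping_eqI) (simp add: lookup_add algebra_simps)
lemma smul_add2: "smul (c + d) x = smul c x + smul d x"
  by (rule poly_mapping_eqI) (simp add: lookup_add algebra_simps)
lemma smul_smul [simp]: "smul c (smul d x) = smul (c * d) x"
  by (rule poly_mapping_eqI) (simp add: algebra_simps)
lemma smul_one [simp]: "smul 1 x = x"
  by (rule poly_mapping_eqI) simp
lemma smul_zero [simp]: "smul 0 x = 0"
  by (rule poly_mapping_eqI) simp
lemma smul_zero2 [simp]: "smul c 0 = 0"
  by (rule poly_mapping_eqI) simp
lemma smul_minus: "smul c (x - y) = smul c x - smul c y"
  by (rule poly_mapping_eqI) (simp add: lookup_minus algebra_simps)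
lemma smul_uminus: "smul c (- x) = - smul c x"
  by (rule poly_mapping_eqI) (simp)
lemma smul_neg1 [simp]: "smul (-1) x = - x"
  by (rule poly_mapping_eqI) (simp)
lemma smul_sum: "smul c (sum f A) = (\<Sum>a\<in>A. smul c (f a))"
  by (induction A rule: infinite_finite_induct) (auto simp: smul_add)
lemma smul_sum2: "smul (sum f A) x = (\<Sum>a\<in>A. smul (f a) x)"
  by (induction A rule: infinite_finite_induct) (auto simp: smul_add2)
lemma smul_single [simp]: "smul c (Poly_Mapping.single k a) = Poly_Mapping.single k (c * a)"
  by (rule poly_mapping_eqI) (simp add: lookup_single when_def)

lemma poly_expand:
  "t = (\<Sum>w\<in>Poly_Mapping.keys t. Poly_Mapping.single w (Poly_Mapping.lookup t w))"
  by (rule poly_mapping_eqI) (simp add: lookup_sum lookup_single when_def in_keys_iff)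

lemma lin_ext_superset:
  assumes "finite S" "Poly_Mapping.keys t \<subseteq> S"
  shows "lin_ext g t = (\<Sum>w\<in>S. smul (Poly_Mapping.lookup t w) (g w))"
  unfolding lin_ext_def
  by (rule sum.mono_neutral_left) (use assms in \<open>auto simp: in_keys_iff\<close>)

lemma lin_ext_add: "lin_ext g (s + t) = lin_ext g s + lin_ext g t"
proof -
  let ?S = "Poly_Mapping.keys s \<union> Poly_Mapping.keys t"
  have "lin_ext g (s + t) = (\<Sum>w\<in>?S. smul (Poly_Mapping.lookup (s+t) w) (g w))"
    by (rule lin_ext_superset) (auto dest: set_mp[OF keys_add])
  also have "\<dots> = (\<Sum>w\<in>?S. smul (Poly_Mapping.lookup s w) (g w)) + (\<Sum>w\<in>?S. smul (Poly_Mapping.lookup t w) (g w))"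
    by (simp add: lookup_add smul_add2 sum.distrib)
  also have "\<dots> = lin_ext g s + lin_ext g t"
    by (subst (1 2) lin_ext_superset[where S="?S"]) auto
  finally show ?thesis .
qed

lemma lin_ext_smul: "lin_ext g (smul c t) = smul c (lin_ext g t)"
proof -
  have "lin_ext g (smul c t) = (\<Sum>w\<in>Poly_Mapping.keys t. smul (Poly_Mapping.lookup (smul c t) w) (g w))"
    by (rule lin_ext_superset) (auto simp: in_keys_iff)
  also have "\<dots> = smul c (lin_ext g t)"
    by (simp add: lin_ext_def smul_sum)
  finally show ?thesis .
qed

lemma lin_ext_zero [simp]: "lin_ext g 0 = 0"
  by (simp add: lin_ext_def)

lemma lin_ext_single [simp]: "lin_ext g (Poly_Mapping.single w c) = smul c (g w)"
  by (simp add: lin_ext_def)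

lemma lin_ext_uminus: "lin_ext g (- t) = - lin_ext g t"
  using lin_ext_smul[of g "-1" t] by simp

lemma lin_ext_diff: "lin_ext g (s - t) = lin_ext g s - lin_ext g t"
  using lin_ext_add[of g s "-t"] by (simp add: lin_ext_uminus)

lemma lin_ext_sum: "lin_ext g (sum f A) = (\<Sum>a\<in>A. lin_ext g (f a))"
  by (induction A rule: infinite_finite_induct) (auto simp: lin_ext_add)

lemma lin_ext_cong: "(\<And>w. w \<in> Poly_Mapping.keys t \<Longrightarrow> g w = h w) \<Longrightarrow> lin_ext g t = lin_ext h t"
  by (simp add: lin_ext_def)

lemma lin_ext_id: "lin_ext (\<lambda>w. Poly_Mapping.single w 1) t = t"
  by (simp add: lin_ext_def) (rule poly_expand[symmetric])

lemma lin_ext_fadd: "lin_ext (\<lambda>w. g w + h w) t = lin_ext g t + lin_ext h t"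
  by (simp add: lin_ext_def smul_add sum.distrib)
lemma lin_ext_fdiff: "lin_ext (\<lambda>w. g w - h w) t = lin_ext g t - lin_ext h t"
  by (simp add: lin_ext_def smul_minus sum_subtractf)
lemma lin_ext_fsmul: "lin_ext (\<lambda>w. smul c (g w)) t = smul c (lin_ext g t)"
  by (simp add: lin_ext_def smul_sum mult.commute)
lemma lin_ext_fsum: "lin_ext (\<lambda>w. \<Sum>a\<in>A. g a w) t = (\<Sum>a\<in>A. lin_ext (g a) t)"
  by (simp add: lin_ext_def smul_sum sum.swap[of _ A])
lemma lin_ext_fzero [simp]: "lin_ext (\<lambda>w. 0) t = 0"
  by (simp add: lin_ext_def)

definition lin :: "(('a \<Rightarrow>\<^sub>0 'k::field) \<Rightarrow> ('c \<Rightarrow>\<^sub>0 'k)) \<Rightarrow> bool" where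
  "lin F \<longleftrightarrow> (\<forall>x y. F (x + y) = F x + F y) \<and> (\<forall>c x. F (smul c x) = smul c (F x))"

lemma linD: assumes "lin F" shows "F (x + y) = F x + F y" "F (smul c x) = smul c (F x)"
  using assms by (auto simp: lin_def)

lemma lin_zero: "lin F \<Longrightarrow> F 0 = 0"
  using linD(2)[of F 0 0] by simp
lemma lin_uminus: "lin F \<Longrightarrow> F (- x) = - F x"
  using linD(2)[of F "-1" x] by simp
lemma lin_diff: "lin F \<Longrightarrow> F (x - y) = F x - F y"
  using linD(1)[of F x "-y"] by (simp add: lin_uminus)
lemma lin_sum: "lin F \<Longrightarrow> F (sum f A) = (\<Sum>a\<in>A. F (f a))"
  by (induction A rule: infinite_finite_induct) (auto simp: lin_zero linD)

lemma lin_lin_ext [simp]: "lin (lin_ext g)"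
  by (simp add: lin_def lin_ext_add lin_ext_smul)

lemma lin_commute: "lin F \<Longrightarrow> F (lin_ext g t) = lin_ext (\<lambda>w. F (g w)) t"
  by (simp add: lin_ext_def lin_sum linD)

lemma lin_expand: "lin F \<Longrightarrow> F t = lin_ext (\<lambda>w. F (Poly_Mapping.single w 1)) t"
  using lin_commute[of F "\<lambda>w. Poly_Mapping.single w 1" t] by (simp add: lin_ext_id)

lemma lin_eqI: "lin F \<Longrightarrow> lin G \<Longrightarrow> (\<And>w. F (Poly_Mapping.single w 1) = G (Poly_Mapping.single w 1)) \<Longrightarrow> F t = G t"
proof -
  assume a: "lin F" "lin G" "\<And>w. F (Poly_Mapping.single w 1) = G (Poly_Mapping.single w 1)"
  have "F t = lin_ext (\<lambda>w. F (Poly_Mapping.single w 1)) t" by (rule lin_expand[OF a(1)])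
  also have "\<dots> = lin_ext (\<lambda>w. G (Poly_Mapping.single w 1)) t" by (simp add: a(3))
  also have "\<dots> = G t" by (rule lin_expand[OF a(2), symmetric])
  finally show ?thesis .
qed

lemma lin_comp: "lin F \<Longrightarrow> lin G \<Longrightarrow> lin (\<lambda>x. F (G x))"
  by (simp add: lin_def)
lemma lin_add: "lin F \<Longrightarrow> lin G \<Longrightarrow> lin (\<lambda>x. F x + G x)"
  by (simp add: lin_def smul_add)
lemma lin_sub: "lin F \<Longrightarrow> lin G \<Longrightarrow> lin (\<lambda>x. F x - G x)"
  by (simp add: lin_def smul_minus)
lemma lin_smul: "lin F \<Longrightarrow> lin (\<lambda>x. smul c (F x))"
  by (simp add: lin_def smul_add mult.commute)
lemma lin_fsum: "(\<And>a. a \<in> A \<Longrightarrow> lin (F a)) \<Longrightarrow> lin (\<lambda>x. \<Sum>a\<in>A. F a x)"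
  by (simp add: lin_def smul_sum sum.distrib)
lemma lin_id: "lin (\<lambda>x. x)"
  by (simp add: lin_def)
lemma lin_const0: "lin (\<lambda>x. 0)"
  by (simp add: lin_def)

declare bvec_def [simp]

lemma cat_alt: "cat s t = lin_ext (\<lambda>v. lin_ext (\<lambda>w. Poly_Mapping.single (v @ w) 1) t) s"
  by (simp add: cat_def lin_ext_def smul_sum)

lemma lin_cat1: "lin (\<lambda>s. cat s t)"
  by (simp add: cat_alt)
lemma lin_cat2: "lin (\<lambda>t. cat s t)"
  by (simp add: lin_def cat_alt lin_ext_add lin_ext_fadd lin_ext_smul lin_ext_fsmul)

lemma cat_single [simp]: "cat (Poly_Mapping.single v a) (Poly_Mapping.single w b) = Poly_Mapping.single (v @ w) (a * b)"
  by (simp add: cat_alt)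

lemma cat_zero1 [simp]: "cat 0 t = 0" using lin_zero[OF lin_cat1[of t]] by simp
lemma cat_zero2 [simp]: "cat s 0 = 0" using lin_zero[OF lin_cat2[of s]] by simp
lemma cat_add1: "cat (s1 + s2) t = cat s1 t + cat s2 t" using linD(1)[OF lin_cat1[of t]] by simp
lemma cat_add2: "cat s (t1 + t2) = cat s t1 + cat s t2" using linD(1)[OF lin_cat2[of s]] by simp
lemma cat_smul1: "cat (smul c s) t = smul c (cat s t)" using linD(2)[OF lin_cat1[of t]] by simp
lemma cat_smul2: "cat s (smul c t) = smul c (cat s t)" using linD(2)[OF lin_cat2[of s]] by simp
lemma cat_diff1: "cat (s1 - s2) t = cat s1 t - cat s2 t" using lin_diff[OF lin_cat1[of t]] by simp
lemma cat_diff2: "cat s (t1 - t2) = cat s t1 - cat s t2" using lin_diff[OF lin_cat2[of s]] by simp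
lemma cat_uminus1: "cat (- s) t = - cat s t" using lin_uminus[OF lin_cat1[of t]] by simp
lemma cat_uminus2: "cat s (- t) = - cat s t" using lin_uminus[OF lin_cat2[of s]] by simp

lemma cat_unit_right [simp]: "cat t (Poly_Mapping.single [] 1) = t"
  using lin_eqI[OF lin_cat1[of "Poly_Mapping.single [] 1"] lin_id, of t] by simp
lemma cat_unit_left [simp]: "cat (Poly_Mapping.single [] 1) t = t"
  using lin_eqI[OF lin_cat2[of "Poly_Mapping.single [] 1"] lin_id, of t] by simp

lemma cat_assoc: "cat (cat r s) t = cat r (cat s t)"
proof -
  have 1: "cat (Poly_Mapping.single (a @ b) 1) t
      = cat (Poly_Mapping.single a 1) (cat (Poly_Mapping.single b 1) t)" for a b
    by (rule lin_eqI[OF lin_cat2 lin_comp[OF lin_cat2 lin_cat2]]) simp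
  have 2: "cat (cat (Poly_Mapping.single a 1) s) t = cat (Poly_Mapping.single a 1) (cat s t)" for a
    by (rule lin_eqI[OF lin_comp[OF lin_cat1 lin_cat2] lin_comp[OF lin_cat2 lin_cat1]]) (simp add: 1)
  show ?thesis
    by (rule lin_eqI[OF lin_comp[OF lin_cat1 lin_cat1] lin_cat1]) (simp add: 2)
qed

lemma emb1_eq: "emb1 = lin_ext (\<lambda>b. Poly_Mapping.single [b] 1)"
  by (rule ext) (simp add: emb1_def)
lemma lin_emb1 [simp]: "lin emb1" by (simp add: emb1_eq)
lemma emb1_single [simp]: "emb1 (Poly_Mapping.single b c) = Poly_Mapping.single [b] c"
  by (simp add: emb1_eq)

lemma tens2: "tens [x, y] = cat (emb1 x) (emb1 y)" by simp
lemma lin_tens1: "lin (\<lambda>x. tens [x, y])" by (simp add: lin_comp[OF lin_cat1 lin_emb1])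
lemma lin_tens2: "lin (\<lambda>y. tens [x, y])" by (simp add: lin_comp[OF lin_cat2 lin_emb1])
lemma tens2_single [simp]: "tens [Poly_Mapping.single a 1, Poly_Mapping.single b 1] = Poly_Mapping.single [a, b] 1"
  by simp

lemma app_at_single: "app_at i F (Poly_Mapping.single w 1) =
   cat (cat (Poly_Mapping.single (take i w) 1) (F (Poly_Mapping.single (w ! i) 1))) (Poly_Mapping.single (drop (Suc i) w) 1)"
  by (simp add: app_at_def)
lemma app_at0_single [simp]: "app_at 0 F (Poly_Mapping.single (a # w) 1) = cat (F (Poly_Mapping.single a 1)) (Poly_Mapping.single w 1)"
  by (simp add: app_at_single)
lemma app_at1_single [simp]: "app_at (Suc 0) F (Poly_Mapping.single (a # b # w) 1) =
    cat (Poly_Mapping.single [a] 1) (cat (F (Poly_Mapping.single b 1)) (Poly_Mapping.single w 1))"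
  by (simp add: app_at_single cat_assoc)
lemma lin_app_at [simp]: "lin (app_at i F)"
  by (simp add: app_at_def[abs_def])
lemma app_at_eq: "app_at i F t = lin_ext (\<lambda>w. app_at i F (Poly_Mapping.single w 1)) t"
  by (rule lin_expand) simp

definition hom :: "nat \<Rightarrow> ('a list \<Rightarrow>\<^sub>0 'k::field) \<Rightarrow> bool" where
  "hom k t \<longleftrightarrow> (\<forall>w\<in>Poly_Mapping.keys t. length w = k)"

lemma hom_zero [simp]: "hom k 0" by (simp add: hom_def)
lemma hom_add: "hom k s \<Longrightarrow> hom k t \<Longrightarrow> hom k (s + t)"
  by (auto simp: hom_def dest: set_mp[OF keys_add])
lemma hom_uminus: "hom k s \<Longrightarrow> hom k (- s)"
  by (auto simp: hom_def)
lemma hom_diff: "hom k s \<Longrightarrow> hom k t \<Longrightarrow> hom k (s - t)"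
  by (auto simp: hom_def dest: set_mp[OF keys_diff])
lemma hom_smul: "hom k s \<Longrightarrow> hom k (smul c s)"
  by (auto simp: hom_def in_keys_iff)
lemma hom_sum: "(\<And>a. a \<in> A \<Longrightarrow> hom k (f a)) \<Longrightarrow> hom k (sum f A)"
  by (induction A rule: infinite_finite_induct) (auto intro: hom_add)
lemma hom_single: "length w = k \<Longrightarrow> hom k (Poly_Mapping.single w c)"
  by (simp add: hom_def)
lemma hom_lin_ext: "(\<And>w. w \<in> Poly_Mapping.keys t \<Longrightarrow> hom k (g w)) \<Longrightarrow> hom k (lin_ext g t)"
  unfolding lin_ext_def by (intro hom_sum hom_smul) auto
lemma hom_expand: "hom k t \<Longrightarrow> t = lin_ext (\<lambda>w. Poly_Mapping.single w 1) t"
  by (simp add: lin_ext_id)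
lemma hom_cat: "hom a s \<Longrightarrow> hom b t \<Longrightarrow> hom (a + b) (cat s t)"
  unfolding cat_def hom_def
  by (intro ballI) (auto dest!: set_mp[OF keys_sum] split: if_splits)

lemma hom_emb1: "hom 1 (emb1 x)"
  by (simp add: emb1_eq hom_lin_ext hom_single)
lemma hom_tens2: "hom 2 (tens [x, y])"
proof -
  have "hom (1+1) (cat (emb1 x) (emb1 y))" by (rule hom_cat[OF hom_emb1 hom_emb1])
  then show ?thesis by (simp add: numeral_2_eq_2)
qed

declare tens.simps [simp del]

lemma cat_single_assoc [simp]: "cat (Poly_Mapping.single v a) (cat (Poly_Mapping.single w b) t) = cat (Poly_Mapping.single (v @ w) (a * b)) t"
  by (simp add: cat_assoc[symmetric])

lemma len2: "length w = 2 \<Longrightarrow> w = [w ! 0, w ! 1]"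
  by (auto simp: length_Suc_conv numeral_2_eq_2)

lemma lin_eqI_hom: "lin F \<Longrightarrow> lin G \<Longrightarrow> hom k t \<Longrightarrow>
   (\<And>w. length w = k \<Longrightarrow> F (Poly_Mapping.single w 1) = G (Poly_Mapping.single w 1)) \<Longrightarrow> F t = G t"
proof -
  assume a: "lin F" "lin G" "hom k t" "\<And>w. length w = k \<Longrightarrow> F (Poly_Mapping.single w 1) = G (Poly_Mapping.single w 1)"
  have "F t = lin_ext (\<lambda>w. F (Poly_Mapping.single w 1)) t" by (rule lin_expand) (fact a(1))
  also have "\<dots> = lin_ext (\<lambda>w. G (Poly_Mapping.single w 1)) t"
    by (rule lin_ext_cong) (use a(3,4) in \<open>auto simp: hom_def\<close>)
  also have "\<dots> = G t" by (rule lin_expand[symmetric]) (fact a(2))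
  finally show ?thesis .
qed

lemma hom_app_at0: "hom (Suc k) t \<Longrightarrow> (\<And>y. hom j (F y)) \<Longrightarrow> hom (j + k) (app_at 0 F t)"
proof -
  assume a: "hom (Suc k) t" "\<And>y. hom j (F y)"
  have "hom (j + k) (lin_ext (\<lambda>w. app_at 0 F (Poly_Mapping.single w 1)) t)"
  proof (rule hom_lin_ext)
    fix w assume "w \<in> Poly_Mapping.keys t"
    then obtain b w' where w: "w = b # w'" "length w' = k" using a(1) by (auto simp: hom_def length_Suc_conv)
    show "hom (j + k) (app_at 0 F (Poly_Mapping.single w 1))"
      unfolding w(1) app_at0_single by (rule hom_cat[OF a(2) hom_single[OF w(2)]])
  qed
  then show ?thesis by (subst app_at_eq)
qed

lemma app_at0_cat: "hom (Suc k) s \<Longrightarrow> app_at 0 F (cat s (Poly_Mapping.single v 1)) = cat (app_at 0 F s) (Poly_Mapping.single v 1)"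
proof -
  assume h: "hom (Suc k) s"
  have "app_at 0 F (cat s (Poly_Mapping.single v 1)) = app_at 0 F (lin_ext (\<lambda>w. cat (Poly_Mapping.single w 1) (Poly_Mapping.single v 1)) s)"
    by (subst lin_expand[OF lin_cat1]) (rule refl)
  also have "\<dots> = lin_ext (\<lambda>w. app_at 0 F (Poly_Mapping.single (w @ v) 1)) s"
    by (simp add: lin_commute)
  also have "\<dots> = lin_ext (\<lambda>w. cat (app_at 0 F (Poly_Mapping.single w 1)) (Poly_Mapping.single v 1)) s"
    apply (rule lin_ext_cong)
    using h by (auto simp: hom_def length_Suc_conv cat_assoc)
  also have "\<dots> = cat (app_at 0 F s) (Poly_Mapping.single v 1)"
    by (subst (2) app_at_eq) (simp add: lin_commute[OF lin_cat1])
  finally show ?thesis .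
qed

lemma app_at_fadd: "app_at i (\<lambda>y. F y + G y) t = app_at i F t + app_at i G t"
  by (simp add: app_at_def cat_add1 cat_add2 lin_ext_fadd)

lemma omega_eq: "omega m = lin_ext (\<lambda>w. lcomb m (map bvec w))"
  by (rule ext) (simp add: omega_def)
lemma lin_omega [simp]: "lin (omega m)" by (simp add: omega_eq)
lemma omega_single [simp]: "omega m (Poly_Mapping.single w c) = smul c (lcomb m (map bvec w))"
  by (simp add: omega_eq)
lemma omega_zero [simp]: "omega m 0 = 0" by (simp add: omega_eq)

lemma omega_emb1 [simp]: "omega m (emb1 x) = x"
  by (rule lin_eqI[OF lin_comp[OF lin_omega lin_emb1] lin_id]) simp

definition lin2 :: "(('a \<Rightarrow>\<^sub>0 'k::field) \<Rightarrow> ('a \<Rightarrow>\<^sub>0 'k) \<Rightarrow> ('a \<Rightarrow>\<^sub>0 'k)) \<Rightarrow> bool" where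
  "lin2 m \<longleftrightarrow> (\<forall>y. lin (\<lambda>x. m x y)) \<and> (\<forall>x. lin (\<lambda>y. m x y))"

lemma lin_mult2_1: "lin (\<lambda>s. mult2 m s t)"
  by (simp add: mult2_def)
lemma lin_mult2_2: "lin (\<lambda>t. mult2 m s t)"
  by (simp add: lin_def mult2_def lin_ext_add lin_ext_fadd lin_ext_smul lin_ext_fsmul)

lemma mult2_single_right: "mult2 m s (Poly_Mapping.single w 1) = mult2 m s (tens [bvec (w!0), bvec (w!1)])"
  by (rule lin_eqI[OF lin_mult2_1 lin_mult2_1]) (simp add: mult2_def)

lemma mult2_tens: assumes "lin2 m"
  shows "mult2 m (tens [a, b]) (tens [c, d]) = tens [m a c, m b d]"
proof -
  have l1: "lin (\<lambda>x. m x y)" "lin (\<lambda>y. m x y)" for x y using assms by (auto simp: lin2_def)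
  have A0: "mult2 m (Poly_Mapping.single [i, j] 1) (tens [Poly_Mapping.single k 1, Poly_Mapping.single l 1])
     = tens [m (Poly_Mapping.single i 1) (Poly_Mapping.single k 1), m (Poly_Mapping.single j 1) (Poly_Mapping.single l 1)]" for i j k l
    by (simp add: mult2_def)
  have A1: "mult2 m (Poly_Mapping.single [i, j] 1) (tens [Poly_Mapping.single k 1, d]) = tens [m (Poly_Mapping.single i 1) (Poly_Mapping.single k 1), m (Poly_Mapping.single j 1) d]" for i j k d
  proof (rule lin_eqI[of "\<lambda>d. mult2 m (Poly_Mapping.single [i, j] 1) (tens [Poly_Mapping.single k 1, d])"
          "\<lambda>d. tens [m (Poly_Mapping.single i 1) (Poly_Mapping.single k 1), m (Poly_Mapping.single j 1) d]"])
    show "lin (\<lambda>d. mult2 m (Poly_Mapping.single [i, j] 1) (tens [Poly_Mapping.single k 1, d]))"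
      by (rule lin_comp[OF lin_mult2_2 lin_tens2])
    show "lin (\<lambda>d. tens [m (Poly_Mapping.single i 1) (Poly_Mapping.single k 1), m (Poly_Mapping.single j 1) d])"
      by (rule lin_comp[OF lin_tens2 l1(2)])
  qed (rule A0)
  have A: "mult2 m (Poly_Mapping.single [i, j] 1) (tens [c, d]) = tens [m (Poly_Mapping.single i 1) c, m (Poly_Mapping.single j 1) d]" for i j c d
  proof (rule lin_eqI[of "\<lambda>c. mult2 m (Poly_Mapping.single [i, j] 1) (tens [c, d])"
          "\<lambda>c. tens [m (Poly_Mapping.single i 1) c, m (Poly_Mapping.single j 1) d]"])
    show "lin (\<lambda>c. mult2 m (Poly_Mapping.single [i, j] 1) (tens [c, d]))"
      by (rule lin_comp[OF lin_mult2_2 lin_tens1])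
    show "lin (\<lambda>c. tens [m (Poly_Mapping.single i 1) c, m (Poly_Mapping.single j 1) d])"
      by (rule lin_comp[OF lin_tens1 l1(2)])
  qed (rule A1)
  have B: "mult2 m (tens [Poly_Mapping.single i 1, b]) (tens [c, d]) = tens [m (Poly_Mapping.single i 1) c, m b d]" for i b
  proof (rule lin_eqI[of "\<lambda>b. mult2 m (tens [Poly_Mapping.single i 1, b]) (tens [c, d])"
          "\<lambda>b. tens [m (Poly_Mapping.single i 1) c, m b d]"])
    show "lin (\<lambda>b. mult2 m (tens [Poly_Mapping.single i 1, b]) (tens [c, d]))"
      by (rule lin_comp[OF lin_mult2_1 lin_tens2])
    show "lin (\<lambda>b. tens [m (Poly_Mapping.single i 1) c, m b d])"
      by (rule lin_comp[OF lin_tens2 l1(1)])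
  qed (simp add: A)
  show ?thesis
  proof (rule lin_eqI[of "\<lambda>a. mult2 m (tens [a, b]) (tens [c, d])" "\<lambda>a. tens [m a c, m b d]"])
    show "lin (\<lambda>a. mult2 m (tens [a, b]) (tens [c, d]))"
      by (rule lin_comp[OF lin_mult2_1 lin_tens1])
    show "lin (\<lambda>a. tens [m a c, m b d])"
      by (rule lin_comp[OF lin_tens1 l1(1)])
  qed (rule B)
qed


locale bialg =
  fixes m :: "('b \<Rightarrow>\<^sub>0 'k::field) \<Rightarrow> ('b \<Rightarrow>\<^sub>0 'k) \<Rightarrow> ('b \<Rightarrow>\<^sub>0 'k)"
    and u :: "'b \<Rightarrow>\<^sub>0 'k"
    and Delta :: "('b \<Rightarrow>\<^sub>0 'k) \<Rightarrow> ('b list \<Rightarrow>\<^sub>0 'k)"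
    and eps :: "('b \<Rightarrow>\<^sub>0 'k) \<Rightarrow> 'k"
  assumes B: "AsC_Mag_bialgebra m u Delta eps"
begin

lemma lin_m1: "lin (\<lambda>x. m x y)" using B by (simp add: AsC_Mag_bialgebra_def lin_def)
lemma lin_m2: "lin (\<lambda>y. m x y)" using B by (simp add: AsC_Mag_bialgebra_def lin_def)
lemma lin2_m: "lin2 m" by (simp add: lin2_def lin_m1 lin_m2)
lemma m_unit1 [simp]: "m u x = x" using B by (simp add: AsC_Mag_bialgebra_def)
lemma m_unit2 [simp]: "m x u = x" using B by (simp add: AsC_Mag_bialgebra_def)
lemma m_zero1 [simp]: "m 0 y = 0" using lin_zero[OF lin_m1[of y]] by simp
lemma m_zero2 [simp]: "m x 0 = 0" using lin_zero[OF lin_m2[of x]] by simp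
lemma lin_Delta: "lin Delta" using B by (simp add: AsC_Mag_bialgebra_def lin_def)
lemma hom_Delta: "hom 2 (Delta x)" using B by (auto simp: AsC_Mag_bialgebra_def hom_def)
lemma coassoc: "app_at 0 Delta (Delta x) = app_at 1 Delta (Delta x)" using B by (simp add: AsC_Mag_bialgebra_def)
lemma eps_add: "eps (x + y) = eps x + eps y" using B by (simp add: AsC_Mag_bialgebra_def)
lemma eps_smul: "eps (smul c x) = c * eps x" using B by (simp add: AsC_Mag_bialgebra_def)
lemma eps_right_Delta: "eps_right eps (Delta x) = x" using B by (simp add: AsC_Mag_bialgebra_def)
lemma Delta_u: "Delta u = tens [u, u]" using B by (simp add: AsC_Mag_bialgebra_def)
lemma compat: "Delta (m x y) = mult2 m (Delta x) (tens [u, y]) + mult2 m (tens [x, u]) (Delta y) - tens [x, y]"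
  using B by (simp add: AsC_Mag_bialgebra_def)

abbreviation d where "d \<equiv> red_delta u Delta"
abbreviation dp where "dp \<equiv> delta_pow u Delta"

lemma lin_d: "lin d"
proof -
  have "lin (\<lambda>x. Delta x - tens [x, u] - tens [u, x])"
    by (intro lin_sub lin_Delta lin_tens1 lin_tens2)
  then show ?thesis by (simp add: red_delta_def[abs_def])
qed

lemma Delta_eq: "Delta x = d x + tens [x, u] + tens [u, x]"
  by (simp add: red_delta_def)

lemma hom_d: "hom 2 (d x)"
  unfolding red_delta_def by (intro hom_diff hom_Delta hom_tens2)

lemma dp_Suc: "dp (Suc n) x = app_at 0 d (dp n x)"
proof (cases n)
  case 0
  have "app_at 0 d (emb1 x) = d x"
    by (rule lin_eqI[OF lin_comp[OF lin_app_at lin_emb1] lin_d]) simp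
  then show ?thesis using 0 by simp
next
  case (Suc k) then show ?thesis by simp
qed

lemma lin_dp: "lin (dp n)"
proof (induction n)
  case 0
  have "dp 0 = emb1" by (rule ext) simp
  then show ?case by simp
next
  case (Suc n)
  have "lin (\<lambda>x. app_at 0 d (dp n x))" by (rule lin_comp[OF lin_app_at Suc])
  then show ?case by (simp only: dp_Suc)
qed

lemma hom_dp: "hom (Suc n) (dp n x)"
proof (induction n)
  case 0 then show ?case using hom_emb1[of x] by simp
next
  case (Suc n)
  have "hom (2 + n) (app_at 0 d (dp n x))" by (rule hom_app_at0[OF Suc hom_d])
  then show ?case by (simp add: dp_Suc)
qed

lemma P1: "dp (Suc n) x = lin_ext (\<lambda>w. cat (dp n (Poly_Mapping.single (w!0) 1)) (Poly_Mapping.single [w!1] 1)) (d x)"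
proof (induction n)
  case 0
  have "lin_ext (\<lambda>w. cat (dp 0 (Poly_Mapping.single (w!0) 1)) (Poly_Mapping.single [w!1] 1)) (d x)
      = lin_ext (\<lambda>w. Poly_Mapping.single w 1) (d x)"
    apply (rule lin_ext_cong)
    using hom_d[of x] by (auto simp: hom_def dest!: len2)
  then show ?case by (simp add: lin_ext_id)
next
  case (Suc n)
  have "dp (Suc (Suc n)) x = app_at 0 d (dp (Suc n) x)" by (rule dp_Suc)
  also have "\<dots> = lin_ext (\<lambda>w. app_at 0 d (cat (dp n (Poly_Mapping.single (w!0) 1)) (Poly_Mapping.single [w!1] 1))) (d x)"
    by (simp add: Suc lin_commute)
  also have "\<dots> = lin_ext (\<lambda>w. cat (dp (Suc n) (Poly_Mapping.single (w!0) 1)) (Poly_Mapping.single [w!1] 1)) (d x)"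
    by (simp add: app_at0_cat[OF hom_dp] dp_Suc)
  finally show ?case .
qed

lemma P2: "hom (Suc k) s \<Longrightarrow> omega m (cat s (Poly_Mapping.single [b] 1)) = m (omega m s) (Poly_Mapping.single b 1)"
proof -
  assume h: "hom (Suc k) s"
  have "omega m (cat s (Poly_Mapping.single [b] 1)) = omega m (lin_ext (\<lambda>w. cat (Poly_Mapping.single w 1) (Poly_Mapping.single [b] 1)) s)"
    by (subst lin_expand[OF lin_cat1]) (rule refl)
  also have "\<dots> = lin_ext (\<lambda>w. lcomb m (map bvec (w @ [b]))) s"
    by (simp add: lin_commute)
  also have "\<dots> = lin_ext (\<lambda>w. m (lcomb m (map bvec w)) (Poly_Mapping.single b 1)) s"
    apply (rule lin_ext_cong)
    using h by (auto simp: hom_def length_Suc_conv)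
  also have "\<dots> = m (omega m s) (Poly_Mapping.single b 1)"
    by (simp add: omega_eq lin_commute[OF lin_m1])
  finally show ?thesis .
qed


definition R :: "(('b \<Rightarrow>\<^sub>0 'k) \<Rightarrow> ('b \<Rightarrow>\<^sub>0 'k)) \<Rightarrow> ('b list \<Rightarrow>\<^sub>0 'k) \<Rightarrow> ('b \<Rightarrow>\<^sub>0 'k)" where
  "R G t = lin_ext (\<lambda>w. m (G (Poly_Mapping.single (w!0) 1)) (Poly_Mapping.single (w!1) 1)) t"

definition E :: "nat \<Rightarrow> ('b \<Rightarrow>\<^sub>0 'k) \<Rightarrow> ('b \<Rightarrow>\<^sub>0 'k)" where
  "E N x = (\<Sum>n\<le>N. smul ((-1) ^ n) (omega m (dp n x)))"

lemma lin_R: "lin (R G)" by (simp add: R_def[abs_def])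

lemma lin_E: "lin (E N)"
proof -
  have "lin (\<lambda>x. \<Sum>n\<le>N. smul ((-1) ^ n) (omega m (dp n x)))"
    by (intro lin_fsum lin_smul lin_comp[OF lin_omega lin_dp])
  then show ?thesis by (simp add: E_def[abs_def])
qed

lemma R_tens: assumes G: "lin G" shows "R G (tens [a, b]) = m (G a) b"
proof -
  have A: "R G (tens [Poly_Mapping.single i 1, b]) = m (G (Poly_Mapping.single i 1)) b" for i
  proof (rule lin_eqI[of "\<lambda>b. R G (tens [Poly_Mapping.single i 1, b])" "\<lambda>b. m (G (Poly_Mapping.single i 1)) b"])
    show "lin (\<lambda>b. R G (tens [Poly_Mapping.single i 1, b]))" by (rule lin_comp[OF lin_R lin_tens2])
    show "lin (m (G (Poly_Mapping.single i 1)))" using lin_m2 by simp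
  qed (simp add: R_def)
  show ?thesis
  proof (rule lin_eqI[of "\<lambda>a. R G (tens [a, b])" "\<lambda>a. m (G a) b"])
    show "lin (\<lambda>a. R G (tens [a, b]))" by (rule lin_comp[OF lin_R lin_tens1])
    show "lin (\<lambda>a. m (G a) b)" by (rule lin_comp[OF lin_m1 G])
  qed (rule A)
qed

lemma R_fsum: "R (\<lambda>y. \<Sum>n\<in>A. smul (c n) (G n y)) t = (\<Sum>n\<in>A. smul (c n) (R (G n) t))"
  unfolding R_def
  by (simp add: lin_sum[OF lin_m1] linD(2)[OF lin_m1] lin_ext_fsum lin_ext_fsmul)

lemma omega_dp_Suc: "omega m (dp (Suc n) x) = R (\<lambda>y. omega m (dp n y)) (d x)"
proof -
  have "omega m (dp (Suc n) x) = lin_ext (\<lambda>w. omega m (cat (dp n (Poly_Mapping.single (w!0) 1)) (Poly_Mapping.single [w!1] 1))) (d x)"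
    by (simp add: P1 lin_commute)
  also have "\<dots> = R (\<lambda>y. omega m (dp n y)) (d x)"
    by (simp add: R_def P2[OF hom_dp])
  finally show ?thesis .
qed

lemma smul_neg: "smul (- c) v = - smul c v"
  by (rule poly_mapping_eqI) simp

lemma Rec: "E (Suc N) x = x - R (E N) (d x)"
proof -
  have "E (Suc N) x = smul ((-1)^0) (omega m (dp 0 x)) + (\<Sum>n\<le>N. smul ((-1) ^ Suc n) (omega m (dp (Suc n) x)))"
    unfolding E_def by (rule sum.atMost_Suc_shift)
  also have "\<dots> = x - (\<Sum>n\<le>N. smul ((-1) ^ n) (R (\<lambda>y. omega m (dp n y)) (d x)))"
    by (simp add: omega_dp_Suc smul_neg sum_negf)
  also have "(\<Sum>n\<le>N. smul ((-1) ^ n) (R (\<lambda>y. omega m (dp n y)) (d x))) = R (E N) (d x)"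
    unfolding E_def[abs_def] by (rule R_fsum[symmetric])
  finally show ?thesis .
qed

lemma E0: "E 0 x = x" by (simp add: E_def)

lemma mult2_add1: "mult2 m (s1 + s2) t = mult2 m s1 t + mult2 m s2 t" using linD(1)[OF lin_mult2_1[of m t]] by simp
lemma mult2_add2: "mult2 m s (t1 + t2) = mult2 m s t1 + mult2 m s t2" using linD(1)[OF lin_mult2_2[of m s]] by simp
lemma mult2_zero1 [simp]: "mult2 m 0 t = 0" using lin_zero[OF lin_mult2_1[of m t]] by simp
lemma mult2_zero2 [simp]: "mult2 m s 0 = 0" using lin_zero[OF lin_mult2_2[of m s]] by simp
lemma mult2_tens' [simp]: "mult2 m (tens [a, b]) (tens [c, e]) = tens [m a c, m b e]"
  by (rule mult2_tens[OF lin2_m])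

lemma tens_add1: "tens [a1 + a2, b] = tens [a1, b] + tens [a2, b]" using linD(1)[OF lin_tens1[of b]] by simp
lemma tens_add2: "tens [a, b1 + b2] = tens [a, b1] + tens [a, b2]" using linD(1)[OF lin_tens2[of a]] by simp
lemma tens_diff1: "tens [a1 - a2, b] = tens [a1, b] - tens [a2, b]" using lin_diff[OF lin_tens1[of b]] by simp
lemma tens_smul1: "tens [smul c a, b] = smul c (tens [a, b])" using linD(2)[OF lin_tens1[of b]] by simp
lemma tens_zero1 [simp]: "tens [0, b] = 0" using lin_zero[OF lin_tens1[of b]] by simp
lemma tens_zero2 [simp]: "tens [a, 0] = 0" using lin_zero[OF lin_tens2[of a]] by simp

lemma P3: "d (m a b) = tens [a, b] + mult2 m (d a) (tens [u, b]) + mult2 m (tens [a, u]) (d b)"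
proof -
  have "Delta (m a b) = mult2 m (d a + tens [a, u] + tens [u, a]) (tens [u, b]) + mult2 m (tens [a, u]) (d b + tens [b, u] + tens [u, b]) - tens [a, b]"
    by (simp only: compat Delta_eq[symmetric])
  also have "\<dots> = mult2 m (d a) (tens [u, b]) + tens [a, b] + tens [u, m a b] + mult2 m (tens [a, u]) (d b) + tens [m a b, u] + tens [a, b] - tens [a, b]"
    by (simp add: mult2_add1 mult2_add2)
  finally show ?thesis by (simp add: red_delta_def algebra_simps)
qed


lemma app_at1_single' [simp]: "app_at 1 F (Poly_Mapping.single (a # b # w) 1) =
    cat (Poly_Mapping.single [a] 1) (cat (F (Poly_Mapping.single b 1)) (Poly_Mapping.single w 1))"
  using app_at1_single by simp

lemma app0_tens: assumes F: "lin F" shows "app_at 0 F (tens [a, b]) = cat (F a) (emb1 b)"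
proof -
  have A: "app_at 0 F (tens [Poly_Mapping.single i 1, b]) = cat (F (Poly_Mapping.single i 1)) (emb1 b)" for i
  proof (rule lin_eqI[of "\<lambda>b. app_at 0 F (tens [Poly_Mapping.single i 1, b])" "\<lambda>b. cat (F (Poly_Mapping.single i 1)) (emb1 b)"])
    show "lin (\<lambda>b. app_at 0 F (tens [Poly_Mapping.single i 1, b]))" by (rule lin_comp[OF lin_app_at lin_tens2])
    show "lin (\<lambda>b. cat (F (Poly_Mapping.single i 1)) (emb1 b))" by (rule lin_comp[OF lin_cat2 lin_emb1])
  qed simp
  show ?thesis
  proof (rule lin_eqI[of "\<lambda>a. app_at 0 F (tens [a, b])" "\<lambda>a. cat (F a) (emb1 b)"])
    show "lin (\<lambda>a. app_at 0 F (tens [a, b]))" by (rule lin_comp[OF lin_app_at lin_tens1])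
    show "lin (\<lambda>a. cat (F a) (emb1 b))" by (rule lin_comp[OF lin_cat1 F])
  qed (rule A)
qed

lemma app1_tens: assumes F: "lin F" shows "app_at 1 F (tens [a, b]) = cat (emb1 a) (F b)"
proof -
  have A: "app_at 1 F (tens [Poly_Mapping.single i 1, b]) = cat (emb1 (Poly_Mapping.single i 1)) (F b)" for i
  proof (rule lin_eqI[of "\<lambda>b. app_at 1 F (tens [Poly_Mapping.single i 1, b])" "\<lambda>b. cat (emb1 (Poly_Mapping.single i 1)) (F b)"])
    show "lin (\<lambda>b. app_at 1 F (tens [Poly_Mapping.single i 1, b]))" by (rule lin_comp[OF lin_app_at lin_tens2])
    show "lin (\<lambda>b. cat (emb1 (Poly_Mapping.single i 1)) (F b))" by (rule lin_comp[OF lin_cat2 F])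
  qed simp
  show ?thesis
  proof (rule lin_eqI[of "\<lambda>a. app_at 1 F (tens [a, b])" "\<lambda>a. cat (emb1 a) (F b)"])
    show "lin (\<lambda>a. app_at 1 F (tens [a, b]))" by (rule lin_comp[OF lin_app_at lin_tens1])
    show "lin (\<lambda>a. cat (emb1 a) (F b))" by (rule lin_comp[OF lin_cat1 lin_emb1])
  qed (rule A)
qed

lemma len2E: "length w = 2 \<Longrightarrow> (\<And>a b. w = [a, b] \<Longrightarrow> P) \<Longrightarrow> P"
  by (metis len2)

lemma len2E': "length w = Suc (Suc 0) \<Longrightarrow> (\<And>a b. w = [a, b] \<Longrightarrow> P) \<Longrightarrow> P"
  by (metis len2 numeral_2_eq_2)

lemma P0Q1: "hom 2 t \<Longrightarrow> app_at 0 (\<lambda>y. tens [y, u]) t = app_at 1 (\<lambda>y. tens [u, y]) t"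
  by (rule lin_eqI_hom[OF lin_app_at lin_app_at]) (auto elim!: len2E simp: tens2 cat_assoc)

lemma Q0: "hom 2 t \<Longrightarrow> app_at 0 (\<lambda>y. tens [u, y]) t = cat (emb1 u) t"
  by (rule lin_eqI_hom[OF lin_app_at lin_cat2]) (auto elim!: len2E simp: tens2 cat_assoc)

lemma P1': "hom 2 t \<Longrightarrow> app_at 1 (\<lambda>y. tens [y, u]) t = cat t (emb1 u)"
  by (rule lin_eqI_hom[OF lin_app_at lin_cat1]) (auto elim!: len2E simp: tens2 cat_assoc)

lemma d_u: "d u = - tens [u, u]"
  by (simp add: red_delta_def Delta_u)

lemma coassoc_d: "app_at 0 d (d x) = app_at 1 d (d x)"
proof -
  have DF: "Delta = (\<lambda>y. (d y + tens [y, u]) + tens [u, y])" by (rule ext) (rule Delta_eq)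
  have hT: "hom 2 (Delta x)" by (rule hom_Delta)
  have T: "Delta x = d x + tens [x, u] + tens [u, x]" by (rule Delta_eq)
  have e: "app_at i Delta (Delta x) = app_at i d (Delta x) + app_at i (\<lambda>y. tens [y, u]) (Delta x) + app_at i (\<lambda>y. tens [u, y]) (Delta x)" for i
    by (subst (1) DF) (simp only: app_at_fadd)
  have a0: "app_at 0 d (Delta x) = app_at 0 d (d x) + cat (d x) (emb1 u) + cat (d u) (emb1 x)"
    by (simp only: T linD(1)[OF lin_app_at] app0_tens[OF lin_d])
  have a1: "app_at 1 d (Delta x) = app_at 1 d (d x) + cat (emb1 x) (d u) + cat (emb1 u) (d x)"
    by (simp only: T linD(1)[OF lin_app_at] app1_tens[OF lin_d])
  have main: "app_at 0 d (d x) + cat (d x) (emb1 u) + cat (d u) (emb1 x) + app_at 1 (\<lambda>y. tens [u, y]) (Delta x) + cat (emb1 u) (Delta x)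
     = app_at 1 d (d x) + cat (emb1 x) (d u) + cat (emb1 u) (d x) + cat (Delta x) (emb1 u) + app_at 1 (\<lambda>y. tens [u, y]) (Delta x)"
    using coassoc[of x] unfolding e a0 a1 Q0[OF hT] P0Q1[OF hT] P1'[OF hT] .
  then show ?thesis
    by (simp add: T d_u cat_add1 cat_add2 cat_uminus1 cat_uminus2 tens2 cat_assoc algebra_simps)
qed


lemma dR: "d (R G t) = lin_ext (\<lambda>w. tens [G (Poly_Mapping.single (w!0) 1), Poly_Mapping.single (w!1) 1]) t
   + lin_ext (\<lambda>w. mult2 m (d (G (Poly_Mapping.single (w!0) 1))) (tens [u, Poly_Mapping.single (w!1) 1])) t
   + lin_ext (\<lambda>w. mult2 m (tens [G (Poly_Mapping.single (w!0) 1), u]) (d (Poly_Mapping.single (w!1) 1))) t"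
  unfolding R_def by (simp add: lin_commute[OF lin_d] P3 lin_ext_fadd)

definition Qf :: "(('b \<Rightarrow>\<^sub>0 'k) \<Rightarrow> ('b \<Rightarrow>\<^sub>0 'k)) \<Rightarrow> ('b list \<Rightarrow>\<^sub>0 'k) \<Rightarrow> ('b list \<Rightarrow>\<^sub>0 'k)" where
  "Qf G s = lin_ext (\<lambda>v. tens [m (G (Poly_Mapping.single (v!0) 1)) (Poly_Mapping.single (v!1) 1), Poly_Mapping.single (v!2) 1]) s"

lemma lin_Qf: "lin (Qf G)" by (simp add: Qf_def[abs_def])

lemma QA: "Qf G (cat (Poly_Mapping.single [a] 1) s) = mult2 m (tens [G (Poly_Mapping.single a 1), u]) s"
proof (rule lin_eqI[of "\<lambda>s. Qf G (cat (Poly_Mapping.single [a] 1) s)" "\<lambda>s. mult2 m (tens [G (Poly_Mapping.single a 1), u]) s"])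
  show "lin (\<lambda>s. Qf G (cat (Poly_Mapping.single [a] 1) s))" by (rule lin_comp[OF lin_Qf lin_cat2])
  show "lin (\<lambda>s. mult2 m (tens [G (Poly_Mapping.single a 1), u]) s)" by (rule lin_mult2_2)
next
  fix w
  show "Qf G (cat (Poly_Mapping.single [a] 1) (Poly_Mapping.single w 1)) = mult2 m (tens [G (Poly_Mapping.single a 1), u]) (Poly_Mapping.single w 1)"
    by (subst mult2_single_right) (simp add: Qf_def numeral_2_eq_2 del: tens2_single)
qed

lemma T3a: "hom 2 t \<Longrightarrow> lin_ext (\<lambda>w. mult2 m (tens [G (Poly_Mapping.single (w!0) 1), u]) (d (Poly_Mapping.single (w!1) 1))) t
   = Qf G (app_at 1 d t)"
proof -
  assume h: "hom 2 t"
  have "Qf G (app_at 1 d t) = lin_ext (\<lambda>w. Qf G (app_at 1 d (Poly_Mapping.single w 1))) t"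
    by (subst app_at_eq) (simp add: lin_commute[OF lin_Qf])
  also have "\<dots> = lin_ext (\<lambda>w. mult2 m (tens [G (Poly_Mapping.single (w!0) 1), u]) (d (Poly_Mapping.single (w!1) 1))) t"
    apply (rule lin_ext_cong)
    using h by (auto simp: hom_def QA elim!: len2E)
  finally show ?thesis by simp
qed

lemma T3b: "hom 2 s \<Longrightarrow> Qf G (cat s (Poly_Mapping.single [b] 1)) = tens [R G s, Poly_Mapping.single b 1]"
  by (rule lin_eqI_hom[OF lin_comp[OF lin_Qf lin_cat1] lin_comp[OF lin_tens1 lin_R]])
     (auto elim!: len2E len2E' simp: Qf_def R_def numeral_2_eq_2)

lemma T3: "lin_ext (\<lambda>w. mult2 m (tens [E N (Poly_Mapping.single (w!0) 1), u]) (d (Poly_Mapping.single (w!1) 1))) (d x)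
   = d x - lin_ext (\<lambda>w. tens [E (Suc N) (Poly_Mapping.single (w!0) 1), Poly_Mapping.single (w!1) 1]) (d x)"
proof -
  have "lin_ext (\<lambda>w. mult2 m (tens [E N (Poly_Mapping.single (w!0) 1), u]) (d (Poly_Mapping.single (w!1) 1))) (d x)
     = Qf (E N) (app_at 0 d (d x))"
    by (simp only: T3a[OF hom_d] coassoc_d[symmetric])
  also have "\<dots> = lin_ext (\<lambda>w. Qf (E N) (app_at 0 d (Poly_Mapping.single w 1))) (d x)"
    by (subst app_at_eq) (simp add: lin_commute[OF lin_Qf])
  also have "\<dots> = lin_ext (\<lambda>w. tens [Poly_Mapping.single (w!0) 1 - E (Suc N) (Poly_Mapping.single (w!0) 1), Poly_Mapping.single (w!1) 1]) (d x)"
    apply (rule lin_ext_cong)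
    using hom_d[of x] by (auto simp: hom_def T3b[OF hom_d] Rec elim!: len2E)
  also have "\<dots> = lin_ext (\<lambda>w. Poly_Mapping.single w 1) (d x) - lin_ext (\<lambda>w. tens [E (Suc N) (Poly_Mapping.single (w!0) 1), Poly_Mapping.single (w!1) 1]) (d x)"
    apply (simp only: tens_diff1 lin_ext_fdiff)
    apply (rule arg_cong[where f="\<lambda>z. z - _"])
    apply (rule lin_ext_cong)
    using hom_d[of x] by (auto simp: hom_def elim!: len2E)
  finally show ?thesis by (simp add: lin_ext_id)
qed

lemma diffE: "E (Suc N) y - E N y = smul ((-1) ^ Suc N) (omega m (dp (Suc N) y))"
  by (simp add: E_def)

lemma main_ind: "\<exists>g. \<forall>x. d (E N x) = lin_ext g (dp (Suc N) x)"
proof (induction N)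
  case 0
  show ?case by (rule exI[of _ "\<lambda>w. Poly_Mapping.single w 1"]) (simp add: E0 lin_ext_id)
next
  case (Suc N)
  then obtain g where IH: "\<And>x. d (E N x) = lin_ext g (dp (Suc N) x)" by blast
  define c :: 'k where "c = (-1) ^ Suc N"
  define g' where "g' v = smul c (tens [lcomb m (map bvec (butlast v)), Poly_Mapping.single (last v) 1])
      - mult2 m (g (butlast v)) (tens [u, Poly_Mapping.single (last v) 1])" for v
  have g'cat: "lin_ext g' (cat s (Poly_Mapping.single [b] 1)) = smul c (tens [omega m s, Poly_Mapping.single b 1]) - mult2 m (lin_ext g s) (tens [u, Poly_Mapping.single b 1])" for s b
  proof (rule lin_eqI[of "\<lambda>s. lin_ext g' (cat s (Poly_Mapping.single [b] 1))" "\<lambda>s. smul c (tens [omega m s, Poly_Mapping.single b 1]) - mult2 m (lin_ext g s) (tens [u, Poly_Mapping.single b 1])"])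
    show "lin (\<lambda>s. lin_ext g' (cat s (Poly_Mapping.single [b] 1)))" by (rule lin_comp[OF lin_lin_ext lin_cat1])
    show "lin (\<lambda>s. smul c (tens [omega m s, Poly_Mapping.single b 1]) - mult2 m (lin_ext g s) (tens [u, Poly_Mapping.single b 1]))"
      by (intro lin_sub lin_smul lin_comp[OF lin_tens1 lin_omega] lin_comp[OF lin_mult2_1 lin_lin_ext])
  qed (simp add: g'_def)
  have key: "d (E (Suc N) x) = lin_ext g' (dp (Suc (Suc N)) x)" for x
  proof -
  have "d (E (Suc N) x) = d x - d (R (E N) (d x))" by (simp add: Rec lin_diff[OF lin_d])
  also have "\<dots> = lin_ext (\<lambda>w. tens [E (Suc N) (Poly_Mapping.single (w!0) 1), Poly_Mapping.single (w!1) 1]) (d x)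
       - lin_ext (\<lambda>w. tens [E N (Poly_Mapping.single (w!0) 1), Poly_Mapping.single (w!1) 1]) (d x)
       - lin_ext (\<lambda>w. mult2 m (d (E N (Poly_Mapping.single (w!0) 1))) (tens [u, Poly_Mapping.single (w!1) 1])) (d x)"
    by (simp only: dR T3) (simp add: algebra_simps)
  also have "\<dots> = lin_ext (\<lambda>w. smul c (tens [omega m (dp (Suc N) (Poly_Mapping.single (w!0) 1)), Poly_Mapping.single (w!1) 1])
         - mult2 m (lin_ext g (dp (Suc N) (Poly_Mapping.single (w!0) 1))) (tens [u, Poly_Mapping.single (w!1) 1])) (d x)"
    by (simp only: lin_ext_fdiff[symmetric] tens_diff1[symmetric] diffE IH c_def tens_smul1)
  also have "\<dots> = lin_ext (\<lambda>w. lin_ext g' (cat (dp (Suc N) (Poly_Mapping.single (w!0) 1)) (Poly_Mapping.single [w!1] 1))) (d x)"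
    by (simp only: g'cat)
  also have "\<dots> = lin_ext g' (dp (Suc (Suc N)) x)"
    by (subst (2) P1) (simp add: lin_commute)
  finally show ?thesis .
  qed
  then show ?case by blast
qed


lemma dp_prim: "p \<in> Prim u Delta eps \<Longrightarrow> dp (Suc n) p = 0"
proof (induction n)
  case 0 then show ?case by (simp add: Prim_def)
next
  case (Suc n) then show ?case by (simp only: dp_Suc[of "Suc n"] lin_zero[OF lin_app_at])
qed

lemma E_prim: "p \<in> Prim u Delta eps \<Longrightarrow> E N p = p"
proof (induction N)
  case 0 then show ?case by (simp add: E0)
next
  case (Suc N)
  have "E (Suc N) p = E N p + smul ((-1) ^ Suc N) (omega m (dp (Suc N) p))"
    unfolding E_def by (rule sum.atMost_Suc)
  then show ?case using Suc by (simp add: dp_prim)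
qed

lemma e_map_E:
  assumes N0: "\<forall>n\<ge>N0. dp n x = 0" and N: "N0 \<le> N"
  shows "e_map m u Delta x = E N x"
proof -
  let ?f = "\<lambda>n. smul ((-1) ^ n) (omega m (dp n x))"
  let ?S = "{n. 1 \<le> n \<and> dp n x \<noteq> 0}"
  have lt: "n < N0" if "dp n x \<noteq> 0" for n using N0 that not_le by blast
  have S: "?S \<subseteq> {..N}" using lt N by fastforce
  have "E N x = sum ?f (insert 0 ?S)"
    unfolding E_def
    by (rule sum.mono_neutral_right) (use S in auto)
  also have "\<dots> = ?f 0 + sum ?f ?S"
    by (rule sum.insert) (use S in \<open>auto intro: finite_subset\<close>)
  also have "\<dots> = e_map m u Delta x"
    by (simp add: e_map_def)
  finally show ?thesis by simp
qed

lemma u_nz: "u \<noteq> 0"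
proof
  assume "u = 0"
  then have "Poly_Mapping.single (undefined::'b) (1::'k) = 0"
    using m_unit1[of "Poly_Mapping.single undefined 1"] by simp
  then have "Poly_Mapping.lookup (Poly_Mapping.single (undefined::'b) (1::'k)) undefined = 0" by simp
  then show False by simp
qed

lemma smul_u_zero: "smul c u = 0 \<Longrightarrow> c = 0"
proof -
  assume h: "smul c u = 0"
  obtain k where k: "k \<in> Poly_Mapping.keys u" using u_nz by (metis keys_eq_empty ex_in_conv)
  have "c * Poly_Mapping.lookup u k = 0" using h by (metis lookup_smul lookup_zero)
  then show "c = 0" using k by (simp add: in_keys_iff)
qed

lemma lin_eps_right: "lin (eps_right eps)" by (simp add: eps_right_def[abs_def])

lemma lin_eps_smul: "lin (\<lambda>b. smul (eps b) v)"
  by (simp add: lin_def eps_add eps_smul smul_add2)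

lemma eps_right_tens: "eps_right eps (tens [a, b]) = smul (eps b) a"
proof -
  have A: "eps_right eps (tens [Poly_Mapping.single i 1, b]) = smul (eps b) (Poly_Mapping.single i 1)" for i
  proof (rule lin_eqI[of "\<lambda>b. eps_right eps (tens [Poly_Mapping.single i 1, b])" "\<lambda>b. smul (eps b) (Poly_Mapping.single i 1)"])
    show "lin (\<lambda>b. eps_right eps (tens [Poly_Mapping.single i 1, b]))" by (rule lin_comp[OF lin_eps_right lin_tens2])
    show "lin (\<lambda>b. smul (eps b) (Poly_Mapping.single i 1))" by (rule lin_eps_smul)
  qed (simp add: eps_right_def)
  show ?thesis
  proof (rule lin_eqI[of "\<lambda>a. eps_right eps (tens [a, b])" "\<lambda>a. smul (eps b) a"])
    show "lin (\<lambda>a. eps_right eps (tens [a, b]))" by (rule lin_comp[OF lin_eps_right lin_tens1])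
    show "lin (\<lambda>a. smul (eps b) a)" by (rule lin_smul[OF lin_id])
  qed (rule A)
qed

lemma eps_right_mult2: "eps_right eps (mult2 m (tens [p, u]) s) = m p (eps_right eps s)"
proof (rule lin_eqI[of "\<lambda>s. eps_right eps (mult2 m (tens [p, u]) s)" "\<lambda>s. m p (eps_right eps s)"])
  show "lin (\<lambda>s. eps_right eps (mult2 m (tens [p, u]) s))" by (rule lin_comp[OF lin_eps_right lin_mult2_2])
  show "lin (\<lambda>s. m p (eps_right eps s))" by (rule lin_comp[OF lin_m2 lin_eps_right])
next
  fix w
  have "eps_right eps (mult2 m (tens [p, u]) (Poly_Mapping.single w 1))
      = eps_right eps (tens [m p (Poly_Mapping.single (w!0) 1), Poly_Mapping.single (w!1) 1])"
    by (subst mult2_single_right) (simp del: tens2_single)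
  also have "\<dots> = m p (eps_right eps (Poly_Mapping.single w 1))"
  proof -
    have e: "eps_right eps (Poly_Mapping.single w 1) = smul (eps (Poly_Mapping.single (w!1) 1)) (Poly_Mapping.single (w!0) 1)"
      by (simp add: eps_right_def del: smul_single)
    show ?thesis by (simp only: eps_right_tens e linD(2)[OF lin_m2])
  qed
  finally show "eps_right eps (mult2 m (tens [p, u]) (Poly_Mapping.single w 1)) = m p (eps_right eps (Poly_Mapping.single w 1))" .
qed

lemma eps_mpy: assumes p: "p \<in> Prim u Delta eps" shows "eps (m p y) = 0"
proof -
  have dp0: "d p = 0" using p by (simp add: Prim_def)
  have "Delta (m p y) = tens [p, y] + mult2 m (tens [p, u]) (d y) + tens [m p y, u] + tens [u, m p y]"
    by (subst Delta_eq) (simp add: P3 dp0)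
  then have 1: "m p y = smul (eps y) p + m p (eps_right eps (d y)) + smul (eps u) (m p y) + smul (eps (m p y)) u"
    using eps_right_Delta[of "m p y"] by (simp add: linD(1)[OF lin_eps_right] eps_right_tens eps_right_mult2)
  have 2: "eps_right eps (d y) = y - smul (eps u) y - smul (eps y) u"
    by (simp add: red_delta_def lin_diff[OF lin_eps_right] eps_right_tens eps_right_Delta)
  have 3: "m p (eps_right eps (d y)) = m p y - smul (eps u) (m p y) - smul (eps y) p"
    by (simp add: 2 lin_diff[OF lin_m2] linD(2)[OF lin_m2])
  have "smul (eps (m p y)) u = 0" using 1 unfolding 3 by (simp add: algebra_simps)
  then show ?thesis by (rule smul_u_zero)
qed

lemma rcomb_Cons: "ys \<noteq> [] \<Longrightarrow> rcomb m (p # ys) = m p (rcomb m ys)"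
  by (cases ys) auto

lemma rcomb_Hbar: "xs \<noteq> [] \<Longrightarrow> set xs \<subseteq> Prim u Delta eps \<Longrightarrow> eps (rcomb m xs) = 0"
proof (cases xs)
  case (Cons p ys)
  assume h: "set xs \<subseteq> Prim u Delta eps"
  show ?thesis
  proof (cases ys)
    case Nil then show ?thesis using h Cons by (auto simp: Prim_def Hbar_def)
  next
    case (Cons y ys') then show ?thesis using h \<open>xs = p # ys\<close> by (simp add: eps_mpy)
  qed
qed simp

lemma d_rcomb: "xs \<noteq> [] \<Longrightarrow> set xs \<subseteq> Prim u Delta eps \<Longrightarrow>
   d (rcomb m xs) = (\<Sum>j\<in>{1..<length xs}. tens [rcomb m (take j xs), rcomb m (drop j xs)])"
proof (induction xs)
  case Nil then show ?case by simp
next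
  case (Cons p ys)
  have pP: "p \<in> Prim u Delta eps" using Cons.prems by simp
  have dp0: "d p = 0" using pP by (simp add: Prim_def)
  show ?case
  proof (cases "ys = []")
    case True then show ?thesis using dp0 by simp
  next
    case False
    let ?L = "length ys"
    have IH: "d (rcomb m ys) = (\<Sum>j\<in>{1..<?L}. tens [rcomb m (take j ys), rcomb m (drop j ys)])"
      using Cons False by simp
    have "d (rcomb m (p # ys)) = tens [p, rcomb m ys] + mult2 m (tens [p, u]) (d (rcomb m ys))"
      by (simp add: rcomb_Cons[OF False] P3 dp0)
    also have "\<dots> = tens [p, rcomb m ys] + (\<Sum>j\<in>{1..<?L}. tens [m p (rcomb m (take j ys)), rcomb m (drop j ys)])"
      by (simp add: IH lin_sum[OF lin_mult2_2])
    also have "(\<Sum>j\<in>{1..<?L}. tens [m p (rcomb m (take j ys)), rcomb m (drop j ys)])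
       = (\<Sum>j\<in>{1..<?L}. tens [rcomb m (take (Suc j) (p # ys)), rcomb m (drop (Suc j) (p # ys))])"
      by (rule sum.cong) (use False in \<open>auto simp: rcomb_Cons\<close>)
    also have "\<dots> = (\<Sum>j\<in>{Suc 1..<Suc ?L}. tens [rcomb m (take j (p # ys)), rcomb m (drop j (p # ys))])"
      by (rule sum.shift_bounds_Suc_ivl[symmetric])
    also have "tens [p, rcomb m ys] + \<dots> = (\<Sum>j\<in>{1..<Suc ?L}. tens [rcomb m (take j (p # ys)), rcomb m (drop j (p # ys))])"
      by (subst sum.atLeast_Suc_lessThan[of 1]) (use False in auto)
    finally show ?thesis by simp
  qed
qed

lemma E_rcomb: "\<forall>xs. set xs \<subseteq> Prim u Delta eps \<longrightarrow> 2 \<le> length xs \<longrightarrow> length xs \<le> Suc N \<longrightarrow> E N (rcomb m xs) = 0"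
proof (induction N)
  case 0 then show ?case by auto
next
  case (Suc N)
  show ?case
  proof (intro allI impI)
    fix xs assume P: "set xs \<subseteq> Prim u Delta eps" and L2: "2 \<le> length xs" and LN: "length xs \<le> Suc (Suc N)"
    obtain p ys where xs: "xs = p # ys" using L2 by (cases xs) auto
    have ys: "ys \<noteq> []" using L2 xs by auto
    have pP: "p \<in> Prim u Delta eps" using P xs by simp
    have ne: "xs \<noteq> []" using xs by simp
    let ?F = "\<lambda>j. m (E N (rcomb m (take j xs))) (rcomb m (drop j xs))"
    have "R (E N) (d (rcomb m xs)) = (\<Sum>j\<in>{1..<length xs}. ?F j)"
      by (simp add: d_rcomb[OF ne P] lin_sum[OF lin_R] R_tens[OF lin_E])
    also have "\<dots> = ?F 1 + (\<Sum>j\<in>{Suc 1..<length xs}. ?F j)"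
      by (rule sum.atLeast_Suc_lessThan) (use L2 in auto)
    also have "(\<Sum>j\<in>{Suc 1..<length xs}. ?F j) = 0"
    proof (rule sum.neutral, rule ballI)
      fix j assume j: "j \<in> {Suc 1..<length xs}"
      have s: "set (take j xs) \<subseteq> Prim u Delta eps" by (rule subset_trans[OF set_take_subset P])
      have l: "length (take j xs) = j" using j by simp
      have "E N (rcomb m (take j xs)) = 0"
        by (rule Suc.IH[rule_format, OF s]) (use l j LN in auto)
      then show "?F j = 0" by simp
    qed
    also have "?F 1 = rcomb m xs"
      using xs ys by (simp add: E_prim[OF pP] rcomb_Cons)
    finally have "R (E N) (d (rcomb m xs)) = rcomb m xs" by (simp only: add_0_right)
    then show "E (Suc N) (rcomb m xs) = 0" by (simp only: Rec diff_self)
  qed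
qed

theorem lemma_loc:
  assumes conn: "connected u Delta eps"
  shows "(\<forall>xs. 2 \<le> length xs \<longrightarrow> set xs \<subseteq> Prim u Delta eps \<longrightarrow>
            e_map m u Delta (rcomb m xs) = 0)
       \<and> (\<forall>x\<in>Hbar eps. red_delta u Delta (e_map m u Delta x) = 0)
       \<and> (\<forall>x\<in>Prim u Delta eps. e_map m u Delta x = x)"
proof (intro conjI allI impI ballI)
  fix xs :: "('b \<Rightarrow>\<^sub>0 'k) list"
  assume L: "2 \<le> length xs" and P: "set xs \<subseteq> Prim u Delta eps"
  have ne: "xs \<noteq> []" using L by auto
  have "rcomb m xs \<in> Hbar eps" using rcomb_Hbar[OF ne P] by (auto simp: Hbar_def)
  then obtain N0 where N0: "\<forall>n\<ge>N0. dp n (rcomb m xs) = 0" using conn by (auto simp: connected_def)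
  have "e_map m u Delta (rcomb m xs) = E (max N0 (length xs)) (rcomb m xs)"
    by (rule e_map_E[OF N0]) simp
  also have "\<dots> = 0" using E_rcomb[of "max N0 (length xs)"] L P by auto
  finally show "e_map m u Delta (rcomb m xs) = 0" .
next
  fix x assume x: "x \<in> Hbar eps"
  then obtain N0 where N0: "\<forall>n\<ge>N0. dp n x = 0" using conn by (auto simp: connected_def)
  obtain g where g: "\<And>x. d (E N0 x) = lin_ext g (dp (Suc N0) x)" using main_ind[of N0] by blast
  have "d (e_map m u Delta x) = d (E N0 x)" using e_map_E[OF N0 order.refl] by simp
  also have "\<dots> = 0" using g N0 by simp
  finally show "d (e_map m u Delta x) = 0" .
next
  fix x assume x: "x \<in> Prim u Delta eps"
  have z: "dp n x = 0" if h: "1 \<le> n" for n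
  proof -
    obtain k where "n = Suc k" using h by (cases n) auto
    then show ?thesis using dp_prim[OF x] by simp
  qed
  have "{n. 1 \<le> n \<and> dp n x \<noteq> 0} = {}"
    using z by blast
  then show "e_map m u Delta x = x" by (simp add: e_map_def)
qed

end

theorem lemma4p2:
  fixes m :: "('b \<Rightarrow>\<^sub>0 'k::field) \<Rightarrow> ('b \<Rightarrow>\<^sub>0 'k) \<Rightarrow> ('b \<Rightarrow>\<^sub>0 'k)"
    and u :: "'b \<Rightarrow>\<^sub>0 'k"
    and Delta :: "('b \<Rightarrow>\<^sub>0 'k) \<Rightarrow> ('b list \<Rightarrow>\<^sub>0 'k)"
    and eps :: "('b \<Rightarrow>\<^sub>0 'k) \<Rightarrow> 'k"
  assumes bialg: "AsC_Mag_bialgebra m u Delta eps"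
    and conn: "connected u Delta eps"
  shows "(\<forall>xs. 2 \<le> length xs \<longrightarrow> set xs \<subseteq> Prim u Delta eps \<longrightarrow>
            e_map m u Delta (rcomb m xs) = 0)
       \<and> (\<forall>x\<in>Hbar eps. red_delta u Delta (e_map m u Delta x) = 0)
       \<and> (\<forall>x\<in>Prim u Delta eps. e_map m u Delta x = x)"
proof -
  interpret bialg m u Delta eps by (rule bialg.intro[OF bialg])
  show ?thesis by (rule lemma_loc[OF conn])
qed

end
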